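(* Let $b\in\mathbb{R}$ and $F(x)=x^2+x$. Consider the three-dimensional map on $\mathbb{R}^3$ $$w_{k+1}=w_k-\big(F(x_k+w_k)-F(x_k)\big)+z_k=-w_k^2-2x_kw_k+z_k,\qquad z_{k+1}=bw_k,\qquad x_{k+1}=x_k+w_k$$ (this is the map of a discrete-time memristor Murali-Lakshmanan-Chua circuit, or its dual, with step size $h=1$, $\alpha=\beta=1$, $\gamma=b$ and memristor nonlinearity $F$). Then $\Theta(x,w,z)=w+z-bx+x+x^2$ is a first integral of the map, so $\mathbb{R}^3$ is foliated into the invariant sets $\mathcal{M}(a)=\{(x,w,z)\in\mathbb{R}^3:\Theta(x,w,z)=a\}$, $a\in\mathbb{R}$, and for every $a\in\mathbb{R}$, along any orbit lying in $\mathcal{M}(a)$, setting $y_k=\sum_{j=0}^{k-1}z_j-z_0+bx_0$, the pair $(x_k,y_k)$ obeys the Hénon map $$x_{k+1}=-x_k^2+y_k+a,\qquad y_{k+1}=bx_k.$$ In particular, for every $a\in\mathbb{R}$ the dynamics of this Hénon map with parameters $a,b$ is embedded in the invariant set $\mathcal{M}(a)$.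
   Context: The map $(x,y)\mapsto(-x^2+y+a,\,bx)$ is topologically conjugate to the classical Hénon map $(X,Y)\mapsto(1-aX^2+Y,\,bX)$ via $x=aX$, $y=aY$ (for $a\neq0$). The sequence $y_k$ corresponds to the shifted incremental charge (or flux) variable of the circuit in the flux-charge domain. *)

theory Defs
  imports Main "HOL.Real"
begin

definition Fm :: "real \<Rightarrow> real" where
  "Fm x = x^2 + x"

definition mlc_map :: "real \<Rightarrow> real \<times> real \<times> real \<Rightarrow> real \<times> real \<times> real" where
  "mlc_map b p = (case p of (x, w, z) \<Rightarrow>
      (x + w, w - (Fm (x + w) - Fm x) + z, b * w))"

definition Theta :: "real \<Rightarrow> real \<times> real \<times> real \<Rightarrow> real" where
  "Theta b p = (case p of (x, w, z) \<Rightarrow> w + z - b * x + x + x^2)"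

definition Mset :: "real \<Rightarrow> real \<Rightarrow> (real \<times> real \<times> real) set" where
  "Mset b a = {p. Theta b p = a}"

end

theory Submission
  imports Defs
begin

lemma orbit_part:
  fixes b a :: real and orb :: "nat \<Rightarrow> real \<times> real \<times> real"
  assumes step: "\<forall>k. orb (Suc k) = mlc_map b (orb k)"
    and inM: "\<forall>k. orb k \<in> Mset b a"
  defines "xs \<equiv> (\<lambda>k. fst (orb k))"
    and "zs \<equiv> (\<lambda>k. snd (snd (orb k)))"
  defines "ys \<equiv> (\<lambda>k. (\<Sum>j<k. zs j) - zs 0 + b * xs 0)"
  shows "xs (Suc k) = - ((xs k)^2) + ys k + a \<and> ys (Suc k) = b * xs k"
proof -
  define ws where "ws = (\<lambda>k. fst (snd (orb k)))"
  have orbk: "orb k = (xs k, ws k, zs k)" for k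
    by (simp add: xs_def ws_def zs_def)
  have xS: "xs (Suc k) = xs k + ws k" for k
    using step orbk[of k] orbk[of "Suc k"] by (simp add: mlc_map_def)
  have zS: "zs (Suc k) = b * ws k" for k
    using step orbk[of k] orbk[of "Suc k"] by (simp add: mlc_map_def)
  have th: "ws k + zs k - b * xs k + xs k + (xs k)^2 = a" for k
  proof -
    have "Theta b (orb k) = a" using inM by (simp add: Mset_def)
    then show ?thesis by (simp add: orbk Theta_def)
  qed
  have yS: "ys (Suc k) = ys k + zs k" for k
    by (simp add: ys_def)
  have y1: "ys (Suc k) = b * xs k" for k
  proof (induction k)
    case 0 then show ?case by (simp add: ys_def)
  next
    case (Suc k)
    then show ?case using yS[of "Suc k"] zS[of k] xS[of k] by (simp add: algebra_simps)
  qed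
  have y0: "ys k = b * xs k - zs k" for k
  proof (cases k)
    case 0 then show ?thesis by (simp add: ys_def)
  next
    case (Suc m)
    then show ?thesis using y1[of m] zS[of m] xS[of m] by (simp add: algebra_simps)
  qed
  show ?thesis using y1[of k] y0[of k] xS[of k] th[of k] by (simp add: algebra_simps)
qed

theorem mainTheorem6:
  fixes b :: real
  shows "(\<forall>x w z. mlc_map b (x, w, z) = (x + w, - (w^2) - 2 * x * w + z, b * w))
       \<and> (\<forall>p. Theta b (mlc_map b p) = Theta b p)
       \<and> (\<forall>a. mlc_map b ` Mset b a \<subseteq> Mset b a)
       \<and> (\<forall>a (orb :: nat \<Rightarrow> real \<times> real \<times> real).
            (\<forall>k. orb (Suc k) = mlc_map b (orb k)) \<longrightarrow> (\<forall>k. orb k \<in> Mset b a) \<longrightarrow>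
            (let xs = (\<lambda>k. fst (orb k));
                 zs = (\<lambda>k. snd (snd (orb k)));
                 ys = (\<lambda>k. (\<Sum>j<k. zs j) - zs 0 + b * xs 0)
             in \<forall>k. xs (Suc k) = - ((xs k)^2) + ys k + a \<and> ys (Suc k) = b * xs k))"
proof -
  have A: "\<forall>x w z. mlc_map b (x, w, z) = (x + w, - (w^2) - 2 * x * w + z, b * w)"
    by (simp add: mlc_map_def Fm_def power2_eq_square algebra_simps)
  have B: "\<forall>p. Theta b (mlc_map b p) = Theta b p"
    by (auto simp: mlc_map_def Theta_def Fm_def power2_eq_square algebra_simps)
  have C: "\<forall>a. mlc_map b ` Mset b a \<subseteq> Mset b a"
    using B by (auto simp: Mset_def)
  have D: "\<forall>a (orb :: nat \<Rightarrow> real \<times> real \<times> real).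
            (\<forall>k. orb (Suc k) = mlc_map b (orb k)) \<longrightarrow> (\<forall>k. orb k \<in> Mset b a) \<longrightarrow>
            (let xs = (\<lambda>k. fst (orb k));
                 zs = (\<lambda>k. snd (snd (orb k)));
                 ys = (\<lambda>k. (\<Sum>j<k. zs j) - zs 0 + b * xs 0)
             in \<forall>k. xs (Suc k) = - ((xs k)^2) + ys k + a \<and> ys (Suc k) = b * xs k)"
    unfolding Let_def using orbit_part by blast
  show ?thesis using A B C D by blast
qed

end
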